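(* Let $y=\frac{p+q}{2(1+pq)}$ and $C^*=C\!\left(\frac{(p+q)^2}{4(1+pq)^2}\right)$. For every integer $n\ge0$, as formal power series in $p,q$, $$A_{2n+1}(p,q)=A_{2n+1}(yC^* )\left(\frac{1+pq}{C^*}\right)^{n},\qquad A_{2n+2}(p,q)=\frac{1+yC^*}{1+q}A_{2n+2}(yC^* )\left(\frac{1+pq}{C^*}\right)^{n+1}.$$
   Context: For a permutation $\pi=a_1\cdots a_n$ of $[n]$, an index $i\in[n-1]$ is a descent if $a_i>a_{i+1}$; $\mathrm{des}(\pi)$ is the number of descents, and $\mathrm{odes}(\pi)$, $\mathrm{edes}(\pi)$ count descents at odd and even positions. $A_n(p,q)=\sum_{\pi\in\mathfrak S_n}p^{\mathrm{odes}(\pi)}q^{\mathrm{edes}(\pi)}$ and $A_n(q)=\sum_{\pi\in\mathfrak S_n}q^{\mathrm{des}(\pi)}$ is the Eulerian polynomial. $C(y)=\frac{1-\sqrt{1-4y}}{2y}=\sum_{n\ge0}\frac{1}{n+1}\binom{2n}{n}y^n$. *)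

theory Defs
  imports Complex_Main "HOL-Combinatorics.Permutations"
begin

definition descents :: "nat \<Rightarrow> (nat \<Rightarrow> nat) \<Rightarrow> nat set" where
  "descents n \<pi> = {i \<in> {1..<n}. \<pi> i > \<pi> (Suc i)}"

definition des :: "nat \<Rightarrow> (nat \<Rightarrow> nat) \<Rightarrow> nat" where
  "des n \<pi> = card (descents n \<pi>)"

definition odes :: "nat \<Rightarrow> (nat \<Rightarrow> nat) \<Rightarrow> nat" where
  "odes n \<pi> = card {i \<in> descents n \<pi>. odd i}"

definition edes :: "nat \<Rightarrow> (nat \<Rightarrow> nat) \<Rightarrow> nat" where
  "edes n \<pi> = card {i \<in> descents n \<pi>. even i}"

definition Apq :: "nat \<Rightarrow> real \<Rightarrow> real \<Rightarrow> real" where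
  "Apq n p q = (\<Sum>\<pi> \<in> {\<pi>. \<pi> permutes {1..n}}. p ^ odes n \<pi> * q ^ edes n \<pi>)"

definition eulerian :: "nat \<Rightarrow> real \<Rightarrow> real" where
  "eulerian n t = (\<Sum>\<pi> \<in> {\<pi>. \<pi> permutes {1..n}}. t ^ des n \<pi>)"

text \<open>Catalan generating function C(y) = (1 - sqrt(1-4y))/(2y), with C(0) = 1
  (its value as a power series, convergent for |y| < 1/4).\<close>
definition catC :: "real \<Rightarrow> real" where
  "catC y = (if y = 0 then 1 else (1 - sqrt (1 - 4*y)) / (2*y))"

end

theory Submission
  imports Defs "HOL-Computational_Algebra.Formal_Power_Series"
begin

definition rr :: "real \<Rightarrow> real \<Rightarrow> nat \<Rightarrow> real" where "rr p q l = (if odd l then p else q)"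
definition W :: "real \<Rightarrow> real \<Rightarrow> nat \<Rightarrow> (nat \<Rightarrow> nat) \<Rightarrow> real" where
  "W p q n \<pi> = (\<Prod>i\<in>descents n \<pi>. rr p q i)"

lemma finite_descents[simp]: "finite (descents n \<pi>)"
  unfolding descents_def by auto

lemma W_eq: "p ^ odes n \<pi> * q ^ edes n \<pi> = W p q n \<pi>"
proof -
  have d: "descents n \<pi> = {i \<in> descents n \<pi>. odd i} \<union> {i \<in> descents n \<pi>. even i}" by auto
  have "W p q n \<pi> = (\<Prod>i\<in>{i \<in> descents n \<pi>. odd i}. rr p q i) * (\<Prod>i\<in>{i \<in> descents n \<pi>. even i}. rr p q i)"
    unfolding W_def by (subst d, rule prod.union_disjoint) auto
  also have "(\<Prod>i\<in>{i \<in> descents n \<pi>. odd i}. rr p q i) = (\<Prod>i\<in>{i \<in> descents n \<pi>. odd i}. p)"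
    by (rule prod.cong) (auto simp: rr_def)
  also have "(\<Prod>i\<in>{i \<in> descents n \<pi>. even i}. rr p q i) = (\<Prod>i\<in>{i \<in> descents n \<pi>. even i}. q)"
    by (rule prod.cong) (auto simp: rr_def)
  finally show ?thesis by (simp add: odes_def edes_def)
qed

lemma Apq_W: "Apq n p q = (\<Sum>\<pi>\<in>{\<pi>. \<pi> permutes {1..n}}. W p q n \<pi>)"
  unfolding Apq_def by (simp add: W_eq)

lemma eulerian_Apq: "eulerian n t = Apq n t t"
proof -
  have "t ^ des n \<pi> = t ^ odes n \<pi> * t ^ edes n \<pi>" for \<pi>
  proof -
    have d: "descents n \<pi> = {i \<in> descents n \<pi>. odd i} \<union> {i \<in> descents n \<pi>. even i}" by auto
    have "des n \<pi> = odes n \<pi> + edes n \<pi>"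
      unfolding des_def odes_def edes_def by (subst d, rule card_Un_disjoint) auto
    then show ?thesis by (simp add: power_add)
  qed
  then show ?thesis unfolding eulerian_def Apq_def by simp
qed

definition ins :: "nat \<Rightarrow> nat \<Rightarrow> (nat \<Rightarrow> nat) \<Rightarrow> nat \<Rightarrow> nat" where
  "ins n j \<sigma> = (\<lambda>i. if i = Suc n then j else if i \<in> {1..n} then (if \<sigma> i < j then \<sigma> i else Suc (\<sigma> i)) else i)"
definition std :: "nat \<Rightarrow> (nat \<Rightarrow> nat) \<Rightarrow> nat \<Rightarrow> nat" where
  "std n \<pi> = (\<lambda>i. if i \<in> {1..n} then (if \<pi> i < \<pi> (Suc n) then \<pi> i else \<pi> i - 1) else i)"

lemma ins_permutes:
  assumes s: "\<sigma> permutes {1..n}" and j: "j \<in> {1..Suc n}"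
  shows "ins n j \<sigma> permutes {1..Suc n}"
proof (rule bij_imp_permutes)
  have im: "\<And>x. x \<in> {1..n} \<Longrightarrow> \<sigma> x \<in> {1..n}" using permutes_in_image[OF s] by auto
  have inj: "\<And>x y. \<sigma> x = \<sigma> y \<Longrightarrow> x = y" using permutes_inj[OF s] by (auto dest: injD)
  have i1: "inj_on (ins n j \<sigma>) {1..Suc n}"
  proof (rule inj_onI)
    fix x y assume x: "x \<in> {1..Suc n}" and y: "y \<in> {1..Suc n}" and e: "ins n j \<sigma> x = ins n j \<sigma> y"
    show "x = y"
    proof (cases "x = Suc n")
      case True
      then show ?thesis using e y by (auto simp: ins_def split: if_splits)
    next
      case False
      then have "x \<in> {1..n}" using x by auto
      then show ?thesis using e y inj[of x y] by (auto simp: ins_def split: if_splits)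
    qed
  qed
  have i2: "ins n j \<sigma> ` {1..Suc n} \<subseteq> {1..Suc n}"
  proof
    fix z assume "z \<in> ins n j \<sigma> ` {1..Suc n}"
    then obtain x where x: "x \<in> {1..Suc n}" and z: "z = ins n j \<sigma> x" by auto
    show "z \<in> {1..Suc n}"
    proof (cases "x = Suc n")
      case True then show ?thesis using z j by (simp add: ins_def)
    next
      case False
      then have "x \<in> {1..n}" using x by auto
      then show ?thesis using z im[of x] by (auto simp: ins_def)
    qed
  qed
  show "bij_betw (ins n j \<sigma>) {1..Suc n} {1..Suc n}"
    unfolding bij_betw_def using i1 endo_inj_surj[OF _ i2 i1] by simp
  show "\<And>x. x \<notin> {1..Suc n} \<Longrightarrow> ins n j \<sigma> x = x" by (auto simp: ins_def)
qed

lemma std_permutes: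
  assumes s: "\<pi> permutes {1..Suc n}"
  shows "std n \<pi> permutes {1..n}"
proof (rule bij_imp_permutes)
  have im: "\<And>x. x \<in> {1..Suc n} \<Longrightarrow> \<pi> x \<in> {1..Suc n}" using permutes_in_image[OF s] by auto
  have inj: "\<And>x y. \<pi> x = \<pi> y \<Longrightarrow> x = y" using permutes_inj[OF s] by (auto dest: injD)
  have jn: "\<pi> (Suc n) \<in> {1..Suc n}" using im by auto
  have i1: "inj_on (std n \<pi>) {1..n}"
  proof (rule inj_onI)
    fix x y assume x: "x \<in> {1..n}" and y: "y \<in> {1..n}" and e: "std n \<pi> x = std n \<pi> y"
    have "\<pi> x \<noteq> \<pi> (Suc n)" "\<pi> y \<noteq> \<pi> (Suc n)" using inj x y by fastforce+
    moreover have "\<pi> x \<ge> 1" "\<pi> y \<ge> 1" using im x y by fastforce+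
    ultimately have "\<pi> x = \<pi> y" using e x y by (auto simp: std_def split: if_splits)
    then show "x = y" using inj by blast
  qed
  have i2: "std n \<pi> ` {1..n} \<subseteq> {1..n}"
  proof
    fix z assume "z \<in> std n \<pi> ` {1..n}"
    then obtain x where x: "x \<in> {1..n}" and z: "z = std n \<pi> x" by auto
    have "\<pi> x \<noteq> \<pi> (Suc n)" using inj x by fastforce
    moreover have "\<pi> x \<in> {1..Suc n}" using im x by auto
    ultimately show "z \<in> {1..n}" using z x jn by (auto simp: std_def)
  qed
  show "bij_betw (std n \<pi>) {1..n} {1..n}"
    unfolding bij_betw_def using i1 endo_inj_surj[OF _ i2 i1] by simp
  show "\<And>x. x \<notin> {1..n} \<Longrightarrow> std n \<pi> x = x" by (auto simp: std_def)
qed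

lemma ins_std:
  assumes s: "\<pi> permutes {1..Suc n}"
  shows "ins n (\<pi> (Suc n)) (std n \<pi>) = \<pi>"
proof
  fix i
  have im: "\<And>x. x \<in> {1..Suc n} \<Longrightarrow> \<pi> x \<in> {1..Suc n}" using permutes_in_image[OF s] by auto
  have inj: "\<And>x y. \<pi> x = \<pi> y \<Longrightarrow> x = y" using permutes_inj[OF s] by (auto dest: injD)
  show "ins n (\<pi> (Suc n)) (std n \<pi>) i = \<pi> i"
  proof (cases "i \<in> {1..n}")
    case True
    have "\<pi> i \<noteq> \<pi> (Suc n)" using inj True by fastforce
    moreover have "\<pi> i \<ge> 1" using im True by fastforce
    ultimately show ?thesis using True by (auto simp: ins_def std_def)
  next
    case False
    then show ?thesis using permutes_not_in[OF s, of i]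
      by (auto simp: ins_def std_def)
  qed
qed

lemma std_ins:
  assumes s: "\<sigma> permutes {1..n}" and j: "j \<in> {1..Suc n}"
  shows "std n (ins n j \<sigma>) = \<sigma>" and "ins n j \<sigma> (Suc n) = j"
proof -
  show "ins n j \<sigma> (Suc n) = j" by (simp add: ins_def)
  show "std n (ins n j \<sigma>) = \<sigma>"
  proof
    fix i
    show "std n (ins n j \<sigma>) i = \<sigma> i"
    proof (cases "i \<in> {1..n}")
      case True then show ?thesis by (auto simp: ins_def std_def)
    next
      case False then show ?thesis using permutes_not_in[OF s, of i] by (auto simp: std_def)
    qed
  qed
qed

lemma sum_Suc_perm:
  "(\<Sum>\<pi>\<in>{\<pi>. \<pi> permutes {1..Suc n}}. f \<pi>) =
   (\<Sum>j\<in>{1..Suc n}. \<Sum>\<sigma>\<in>{\<sigma>. \<sigma> permutes {1..n}}. f (ins n j \<sigma>))"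
proof -
  have b: "bij_betw (\<lambda>(j,\<sigma>). ins n j \<sigma>) ({1..Suc n} \<times> {\<sigma>. \<sigma> permutes {1..n}}) {\<pi>. \<pi> permutes {1..Suc n}}"
  proof (rule bij_betw_byWitness[where f'="\<lambda>\<pi>. (\<pi> (Suc n), std n \<pi>)"])
    show "\<forall>a\<in>{1..Suc n} \<times> {\<sigma>. \<sigma> permutes {1..n}}. (\<lambda>\<pi>. (\<pi> (Suc n), std n \<pi>)) ((\<lambda>(j, \<sigma>). ins n j \<sigma>) a) = a"
      using std_ins by auto
    show "\<forall>a'\<in>{\<pi>. \<pi> permutes {1..Suc n}}. (\<lambda>(j, \<sigma>). ins n j \<sigma>) ((\<lambda>\<pi>. (\<pi> (Suc n), std n \<pi>)) a') = a'"
      using ins_std by auto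
    show "(\<lambda>(j, \<sigma>). ins n j \<sigma>) ` ({1..Suc n} \<times> {\<sigma>. \<sigma> permutes {1..n}}) \<subseteq> {\<pi>. \<pi> permutes {1..Suc n}}"
      using ins_permutes by auto
    show "(\<lambda>\<pi>. (\<pi> (Suc n), std n \<pi>)) ` {\<pi>. \<pi> permutes {1..Suc n}} \<subseteq> {1..Suc n} \<times> {\<sigma>. \<sigma> permutes {1..n}}"
    proof
      fix z assume "z \<in> (\<lambda>\<pi>. (\<pi> (Suc n), std n \<pi>)) ` {\<pi>. \<pi> permutes {1..Suc n}}"
      then obtain \<pi> where p: "\<pi> permutes {1..Suc n}" and z: "z = (\<pi> (Suc n), std n \<pi>)" by auto
      have "\<pi> (Suc n) \<in> {1..Suc n}" using permutes_in_image[OF p] by auto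
      then show "z \<in> {1..Suc n} \<times> {\<sigma>. \<sigma> permutes {1..n}}" using z std_permutes[OF p] by auto
    qed
  qed
  have "(\<Sum>j\<in>{1..Suc n}. \<Sum>\<sigma>\<in>{\<sigma>. \<sigma> permutes {1..n}}. f (ins n j \<sigma>))
      = (\<Sum>x\<in>{1..Suc n} \<times> {\<sigma>. \<sigma> permutes {1..n}}. f ((\<lambda>(j,\<sigma>). ins n j \<sigma>) x))"
    by (subst sum.cartesian_product) (simp add: case_prod_beta)
  also have "\<dots> = (\<Sum>\<pi>\<in>{\<pi>. \<pi> permutes {1..Suc n}}. f \<pi>)"
    by (rule sum.reindex_bij_betw[OF b])
  finally show ?thesis by simp
qed

lemma descents_ins:
  assumes s: "\<sigma> permutes {1..n}" and j: "j \<in> {1..Suc n}"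
  shows "descents (Suc n) (ins n j \<sigma>) = descents n \<sigma> \<union> (if 1 \<le> n \<and> j \<le> \<sigma> n then {n} else {})"
proof (rule set_eqI)
  fix i
  show "i \<in> descents (Suc n) (ins n j \<sigma>) \<longleftrightarrow> i \<in> descents n \<sigma> \<union> (if 1 \<le> n \<and> j \<le> \<sigma> n then {n} else {})"
  proof (cases "i < n")
    case True
    then show ?thesis by (auto simp: descents_def ins_def)
  next
    case False
    then show ?thesis by (auto simp: descents_def ins_def)
  qed
qed

lemma W_ins:
  assumes s: "\<sigma> permutes {1..n}" and j: "j \<in> {1..Suc n}"
  shows "W p q (Suc n) (ins n j \<sigma>) = W p q n \<sigma> * (if 1 \<le> n \<and> j \<le> \<sigma> n then rr p q n else 1)"
proof -
  have "n \<notin> descents n \<sigma>" by (simp add: descents_def)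
  then show ?thesis unfolding W_def descents_ins[OF s j] by (auto simp: mult.commute)
qed

definition F :: "real \<Rightarrow> real \<Rightarrow> nat \<Rightarrow> nat \<Rightarrow> real" where
  "F p q n k = (\<Sum>\<sigma>\<in>{\<sigma>. \<sigma> permutes {1..n}}. if \<sigma> n = k then W p q n \<sigma> else 0)"

lemma finite_perms[simp]: "finite {\<sigma>. \<sigma> permutes {1..n::nat}}"
  by (rule finite_permutations) simp

lemma F_Suc:
  assumes j: "j \<in> {1..Suc n}"
  shows "F p q (Suc n) j = (\<Sum>\<sigma>\<in>{\<sigma>. \<sigma> permutes {1..n}}. W p q n \<sigma> * (if 1 \<le> n \<and> j \<le> \<sigma> n then rr p q n else 1))"
proof -
  have "F p q (Suc n) j = (\<Sum>j'\<in>{1..Suc n}. \<Sum>\<sigma>\<in>{\<sigma>. \<sigma> permutes {1..n}}.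
           if ins n j' \<sigma> (Suc n) = j then W p q (Suc n) (ins n j' \<sigma>) else 0)"
    unfolding F_def by (rule sum_Suc_perm)
  also have "\<dots> = (\<Sum>j'\<in>{1..Suc n}. if j' = j then (\<Sum>\<sigma>\<in>{\<sigma>. \<sigma> permutes {1..n}}. W p q (Suc n) (ins n j' \<sigma>)) else 0)"
    by (rule sum.cong) (auto simp: ins_def)
  also have "\<dots> = (\<Sum>\<sigma>\<in>{\<sigma>. \<sigma> permutes {1..n}}. W p q (Suc n) (ins n j \<sigma>))"
    using j by (simp add: sum.delta)
  also have "\<dots> = (\<Sum>\<sigma>\<in>{\<sigma>. \<sigma> permutes {1..n}}. W p q n \<sigma> * (if 1 \<le> n \<and> j \<le> \<sigma> n then rr p q n else 1))"
    by (rule sum.cong) (auto simp: W_ins[OF _ j])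
  finally show ?thesis .
qed

lemma group_last:
  assumes n: "1 \<le> n"
  shows "(\<Sum>\<sigma>\<in>{\<sigma>. \<sigma> permutes {1..n}}. W p q n \<sigma> * h (\<sigma> n)) = (\<Sum>k\<in>{1..n}. F p q n k * h k)"
proof -
  have "(\<Sum>k\<in>{1..n}. F p q n k * h k) = (\<Sum>k\<in>{1..n}. \<Sum>\<sigma>\<in>{\<sigma>. \<sigma> permutes {1..n}}. if \<sigma> n = k then W p q n \<sigma> * h (\<sigma> n) else 0)"
    unfolding F_def sum_distrib_right by (rule sum.cong, simp, rule sum.cong) auto
  also have "\<dots> = (\<Sum>\<sigma>\<in>{\<sigma>. \<sigma> permutes {1..n}}. \<Sum>k\<in>{1..n}. if \<sigma> n = k then W p q n \<sigma> * h (\<sigma> n) else 0)"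
    by (rule sum.swap)
  also have "\<dots> = (\<Sum>\<sigma>\<in>{\<sigma>. \<sigma> permutes {1..n}}. W p q n \<sigma> * h (\<sigma> n))"
  proof (rule sum.cong)
    fix \<sigma> assume "\<sigma> \<in> {\<sigma>. \<sigma> permutes {1..n}}"
    then have "\<sigma> n \<in> {1..n}" using permutes_in_image[of \<sigma> "{1..n}" n] n by auto
    then show "(\<Sum>k\<in>{1..n}. if \<sigma> n = k then W p q n \<sigma> * h (\<sigma> n) else 0) = W p q n \<sigma> * h (\<sigma> n)"
      by (simp add: sum.delta)
  qed simp
  finally show ?thesis by simp
qed

lemma Apq_F: "1 \<le> n \<Longrightarrow> Apq n p q = (\<Sum>k\<in>{1..n}. F p q n k)"
  using group_last[of n p q "\<lambda>_. 1"] by (simp add: Apq_W)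

lemma perms0: "{\<sigma>. \<sigma> permutes {1..(0::nat)}} = {id}"
  by auto

lemma Apq0: "Apq 0 p q = 1"
  by (simp add: Apq_W perms0 W_def descents_def)

lemma F1: "F p q 1 1 = 1"
  using F_Suc[of 1 0 p q] by (simp add: perms0 W_def descents_def)

lemma F_rec:
  assumes n: "1 \<le> n" and j: "j \<in> {1..Suc n}"
  shows "F p q (Suc n) j = (\<Sum>k\<in>{1..n}. F p q n k * (if j \<le> k then rr p q n else 1))"
  using F_Suc[OF j, of p q] group_last[OF n, of p q "\<lambda>k. if j \<le> k then rr p q n else 1"] n by simp

definition rho :: "real \<Rightarrow> real \<Rightarrow> nat \<Rightarrow> real" where
  "rho p q m = (if m = 0 then 1 else rr p q m)"
definition D :: "real \<Rightarrow> real \<Rightarrow> nat \<Rightarrow> nat \<Rightarrow> real" where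
  "D p q a b = (\<Prod>l\<in>{a..<b}. 1 - rr p q l)"

lemma hockey: "(\<Sum>k\<in>{1..J}. real ((k - 1) choose a)) = real (J choose Suc a)"
proof (induction J)
  case 0 then show ?case by simp
next
  case (Suc J)
  have "{1..Suc J} = insert (Suc J) {1..J}" by auto
  then have "(\<Sum>k\<in>{1..Suc J}. real ((k - 1) choose a)) = real (J choose a) + (\<Sum>k\<in>{1..J}. real ((k - 1) choose a))"
    by simp
  also have "\<dots> = real (Suc J choose Suc a)" using Suc by simp
  finally show ?case .
qed

lemma D_Suc: "a \<le> n \<Longrightarrow> D p q a (Suc n) = D p q a n * (1 - rr p q n)"
  unfolding D_def by (simp add: prod.atLeastLessThan_Suc)

lemma F_closed:
  "1 \<le> n \<Longrightarrow> k \<in> {1..n} \<Longrightarrow>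
   F p q n k = (\<Sum>m<n. real ((k - 1) choose (n - 1 - m)) * D p q (Suc m) n * rho p q m * Apq m p q)"
proof (induction n arbitrary: k rule: nat_induct_at_least)
  case base
  then have "k = 1" by auto
  then show ?case using F1[of p q] by (simp add: D_def rho_def Apq0)
next
  case (Suc n)
  note n = \<open>1 \<le> n\<close>
  define X where "X m = D p q (Suc m) n * rho p q m * Apq m p q" for m
  let ?r = "rr p q n"
  have j: "k \<in> {1..Suc n}" using Suc.prems by simp
  have "F p q (Suc n) k = (\<Sum>k'\<in>{1..n}. F p q n k' * (?r + (if k' < k then 1 - ?r else 0)))"
    unfolding F_rec[OF n j] by (rule sum.cong) auto
  also have "\<dots> = ?r * (\<Sum>k'\<in>{1..n}. F p q n k') + (1 - ?r) * (\<Sum>k'\<in>{1..n}. if k' < k then F p q n k' else 0)"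
  proof -
    have "(\<Sum>k'\<in>{1..n}. F p q n k' * (?r + (if k' < k then 1 - ?r else 0)))
       = (\<Sum>k'\<in>{1..n}. ?r * F p q n k' + (1 - ?r) * (if k' < k then F p q n k' else 0))"
      by (rule sum.cong) (auto simp: algebra_simps)
    then show ?thesis by (simp add: sum.distrib sum_distrib_left)
  qed
  also have "(\<Sum>k'\<in>{1..n}. if k' < k then F p q n k' else 0) = (\<Sum>k'\<in>{1..k-1}. F p q n k')"
  proof -
    have "{k'\<in>{1..n}. k' < k} = {1..k-1}" using j by auto
    then show ?thesis by (simp add: sum.inter_filter[symmetric])
  qed
  also have "\<dots> = (\<Sum>k'\<in>{1..k-1}. \<Sum>m<n. real ((k' - 1) choose (n - 1 - m)) * X m)"
    by (rule sum.cong) (use j in \<open>auto simp: Suc.IH X_def mult.assoc\<close>)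
  also have "\<dots> = (\<Sum>m<n. (\<Sum>k'\<in>{1..k-1}. real ((k' - 1) choose (n - 1 - m))) * X m)"
    by (subst sum.swap) (simp add: sum_distrib_right)
  also have "\<dots> = (\<Sum>m<n. real ((k - 1) choose (n - m)) * X m)"
  proof (rule sum.cong)
    fix m assume "m \<in> {..<n}"
    then have e: "Suc (n - 1 - m) = n - m" by auto
    have "(\<Sum>k'\<in>{1..k-1}. real ((k' - 1) choose (n - 1 - m))) = real ((k - 1) choose Suc (n - 1 - m))"
      by (rule hockey)
    then show "(\<Sum>k'\<in>{1..k-1}. real ((k' - 1) choose (n - 1 - m))) * X m = real ((k - 1) choose (n - m)) * X m"
      using e by simp
  qed simp
  also have "(\<Sum>k'\<in>{1..n}. F p q n k') = Apq n p q" using Apq_F[OF n] by simp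
  finally have L: "F p q (Suc n) k = ?r * Apq n p q + (1 - ?r) * (\<Sum>m<n. real ((k - 1) choose (n - m)) * X m)" .
  have "(\<Sum>m<Suc n. real ((k - 1) choose (Suc n - 1 - m)) * D p q (Suc m) (Suc n) * rho p q m * Apq m p q)
      = (\<Sum>m<n. real ((k - 1) choose (n - m)) * D p q (Suc m) (Suc n) * rho p q m * Apq m p q) + ?r * Apq n p q"
    using n by (simp add: D_def rho_def)
  also have "(\<Sum>m<n. real ((k - 1) choose (n - m)) * D p q (Suc m) (Suc n) * rho p q m * Apq m p q)
      = (1 - ?r) * (\<Sum>m<n. real ((k - 1) choose (n - m)) * X m)"
    unfolding sum_distrib_left by (rule sum.cong) (auto simp: D_Suc X_def)
  finally show ?case using L by simp
qed

lemma S_rec: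
  assumes n: "1 \<le> n"
  shows "Apq n p q = (\<Sum>m<n. real (n choose m) * D p q (Suc m) n * rho p q m * Apq m p q)"
proof -
  define X where "X m = D p q (Suc m) n * rho p q m * Apq m p q" for m
  have "Apq n p q = (\<Sum>k\<in>{1..n}. \<Sum>m<n. real ((k - 1) choose (n - 1 - m)) * X m)"
    unfolding Apq_F[OF n] by (rule sum.cong) (use n in \<open>auto simp: F_closed X_def mult.assoc\<close>)
  also have "\<dots> = (\<Sum>m<n. (\<Sum>k\<in>{1..n}. real ((k - 1) choose (n - 1 - m))) * X m)"
    by (subst sum.swap) (simp add: sum_distrib_right)
  also have "\<dots> = (\<Sum>m<n. real (n choose m) * X m)"
  proof (rule sum.cong)
    fix m assume "m \<in> {..<n}"
    then have e: "Suc (n - 1 - m) = n - m" "m \<le> n" by auto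
    have "(\<Sum>k\<in>{1..n}. real ((k - 1) choose (n - 1 - m))) = real (n choose Suc (n - 1 - m))"
      by (rule hockey)
    also have "\<dots> = real (n choose m)" using e binomial_symmetric[of m n] by simp
    finally show "(\<Sum>k\<in>{1..n}. real ((k - 1) choose (n - 1 - m))) * X m = real (n choose m) * X m"
      by simp
  qed simp
  finally show ?thesis by (simp add: X_def mult.assoc)
qed

definition frefl :: "real fps \<Rightarrow> real fps" where
  "frefl f = Abs_fps (\<lambda>n. (-1) ^ n * fps_nth f n)"

lemma frefl_nth[simp]: "fps_nth (frefl f) n = (-1) ^ n * fps_nth f n"
  by (simp add: frefl_def)

lemma frefl_uminus[simp]: "frefl (- f) = - frefl f"
  by (rule fps_ext) (simp add: algebra_simps)
lemma frefl_const[simp]: "frefl (fps_const c) = fps_const c"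
  by (rule fps_ext) simp
lemma frefl_one[simp]: "frefl 1 = 1"
  by (rule fps_ext) simp
lemma frefl_exp[simp]: "frefl (fps_exp c) = fps_exp (- c)"
proof (rule fps_ext)
  fix n
  have "(- c) ^ n = (-1) ^ n * c ^ n" by (metis mult_minus1 power_mult_distrib)
  then show "fps_nth (frefl (fps_exp c)) n = fps_nth (fps_exp (- c)) n" by simp
qed

lemma frefl_add[simp]: "frefl (f + g) = frefl f + frefl g"
  by (rule fps_ext) (simp add: algebra_simps)
lemma frefl_diff[simp]: "frefl (f - g) = frefl f - frefl g"
  by (rule fps_ext) (simp add: algebra_simps)
lemma frefl_mult[simp]: "frefl (f * g) = frefl f * frefl g"
proof (rule fps_ext)
  fix n
  have "fps_nth (frefl f * frefl g) n = (\<Sum>i=0..n. (-1) ^ i * fps_nth f i * ((-1) ^ (n - i) * fps_nth g (n - i)))"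
    by (simp add: fps_mult_nth)
  also have "\<dots> = (\<Sum>i=0..n. (-1) ^ n * (fps_nth f i * fps_nth g (n - i)))"
  proof (rule sum.cong)
    fix i assume "i \<in> {0..n}"
    then have "(-1::real) ^ i * (-1) ^ (n - i) = (-1) ^ n" by (simp add: power_add[symmetric])
    then show "(-1) ^ i * fps_nth f i * ((-1) ^ (n - i) * fps_nth g (n - i)) = (-1) ^ n * (fps_nth f i * fps_nth g (n - i))"
      by (metis mult.assoc mult.left_commute)
  qed simp
  finally show "fps_nth (frefl (f * g)) n = fps_nth (frefl f * frefl g) n"
    by (simp add: fps_mult_nth sum_distrib_left)
qed

lemma egf_mult_exp:
  "fps_nth (Abs_fps (\<lambda>n. h n / fact n) * fps_exp g) N = (\<Sum>i\<le>N. real (N choose i) * h i * g ^ (N - i)) / fact N"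
proof -
  have "fps_nth (Abs_fps (\<lambda>n. h n / fact n) * fps_exp g) N = (\<Sum>i=0..N. h i / fact i * (g ^ (N - i) / fact (N - i)))"
    by (simp add: fps_mult_nth)
  also have "\<dots> = (\<Sum>i\<le>N. real (N choose i) * h i * g ^ (N - i) / fact N)"
  proof (rule sum.cong)
    fix i assume i: "i \<in> {..N}"
    then have "real (N choose i) = fact N / (fact i * fact (N - i))" by (simp add: binomial_fact)
    then show "h i / fact i * (g ^ (N - i) / fact (N - i)) = real (N choose i) * h i * g ^ (N - i) / fact N"
      by (simp add: field_simps)
  qed (auto simp: atLeast0AtMost)
  finally show ?thesis by (simp add: sum_divide_distrib)
qed

lemma fps_cancel_left:
  fixes Q Z :: "real fps"
  assumes "Q * Z = 0" "fps_nth Q 0 \<noteq> 0"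
  shows "Z = 0"
proof -
  have "Q \<noteq> 0" using assms(2) by auto
  then show ?thesis using assms(1) by simp
qed

lemma frefl_numeral[simp]: "frefl (numeral k) = numeral k"
  by (rule fps_ext) (simp add: numeral_fps_const)

lemma alg1:
  fixes Ao Ae E E' T :: "real fps"
  assumes "(Ao + Ae) * (1 - T * E) = (1 - T) * E" "(Ae - Ao) * (1 - T * E') = (1 - T) * E'" "E * E' = 1"
  shows "(1 - T * E) * (1 - T * E') * (((1 + T) * (Ao * E - Ao) - (1 - T) * (Ae * E - E))
     - ((1 + T) * (- Ao * E' + Ao) - (1 - T) * (Ae * E' - E'))) = 0"
  using assms by algebra

lemma alg2:
  fixes Ao Ae E E' T :: "real fps"
  assumes "(Ao + Ae) * (1 - T * E) = (1 - T) * E" "(Ae - Ao) * (1 - T * E') = (1 - T) * E'" "E * E' = 1"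
  shows "(1 - T * E) * (1 - T * E') * (((1 - T) * Ao * E - (1 + T) * (Ae * E - Ae - E) - 2 * E)
     + ((1 - T) * (- Ao) * E' - (1 + T) * (Ae * E' - Ae - E') - 2 * E') + 2 * (1 - T)) = 0"
  using assms by algebra

locale eulseq =
  fixes a :: "nat \<Rightarrow> real" and t :: real
  assumes aP: "\<And>N. a N = (1 - t) ^ (N + 1) + t * (\<Sum>i\<le>N. real (N choose i) * a i * (1 - t) ^ (N - i))"
    and t1: "t \<noteq> 1"
begin

definition "A = Abs_fps (\<lambda>n. a n / fact n)"
definition "Ao = Abs_fps (\<lambda>n. (if odd n then a n else 0) / fact n)"
definition "Ae = Abs_fps (\<lambda>n. (if even n then a n else 0) / fact n)"
definition "E = fps_exp (1 - t)"
definition "E' = fps_exp (- (1 - t))"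
definition "T = fps_const t"

lemma A_eq: "A * (1 - T * E) = (1 - T) * E"
proof (rule fps_ext)
  fix N
  have "fps_nth (A * E) N = (\<Sum>i\<le>N. real (N choose i) * a i * (1 - t) ^ (N - i)) / fact N"
    unfolding A_def E_def by (rule egf_mult_exp)
  then have "fps_nth (A * (1 - T * E)) N = a N / fact N - t * ((\<Sum>i\<le>N. real (N choose i) * a i * (1 - t) ^ (N - i)) / fact N)"
    by (simp add: algebra_simps T_def A_def)
  also have "\<dots> = (1 - t) ^ (N + 1) / fact N"
    using aP[of N] by (simp add: field_simps)
  also have "\<dots> = fps_nth ((1 - T) * E) N"
    by (simp add: T_def E_def fps_exp_nth field_simps)
  finally show "fps_nth (A * (1 - T * E)) N = fps_nth ((1 - T) * E) N" .
qed

lemma A_split: "A = Ao + Ae"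
  by (rule fps_ext) (simp add: A_def Ao_def Ae_def)

lemma frefl_Ao: "frefl Ao = - Ao"
  by (rule fps_ext) (simp add: Ao_def)
lemma frefl_Ae: "frefl Ae = Ae"
  by (rule fps_ext) (simp add: Ae_def)
lemma frefl_E: "frefl E = E'"
  by (simp add: E_def E'_def)
lemma frefl_T: "frefl T = T"
  by (simp add: T_def)
lemma EE': "E * E' = 1"
  unfolding E_def E'_def by (simp add: fps_exp_add_mult[symmetric])

lemma H1: "(Ao + Ae) * (1 - T * E) = (1 - T) * E"
  using A_eq A_split by simp
lemma H2: "(Ae - Ao) * (1 - T * E') = (1 - T) * E'"
proof -
  have "frefl ((Ao + Ae) * (1 - T * E)) = frefl ((1 - T) * E)" using H1 by simp
  then show ?thesis by (simp add: frefl_Ao frefl_Ae frefl_E frefl_T algebra_simps)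
qed

lemma Q_nz: "fps_nth ((1 - T * E) * (1 - T * E')) 0 \<noteq> 0"
  using t1 by (simp add: T_def E_def E'_def)

definition "X = (1 + T) * (Ao * E - Ao) - (1 - T) * (Ae * E - E)"
definition "Y = (1 - T) * Ao * E - (1 + T) * (Ae * E - Ae - E) - 2 * E"

lemma X_refl: "frefl X = X"
proof -
  have rX: "frefl X = (1 + T) * (- Ao * E' + Ao) - (1 - T) * (Ae * E' - E')"
    by (simp add: X_def frefl_Ao frefl_Ae frefl_E frefl_T)
  have "(1 - T * E) * (1 - T * E') * (X - frefl X) = 0"
    using alg1[OF H1 H2 EE'] by (simp only: rX) (simp only: X_def)
  then have "X - frefl X = 0" using fps_cancel_left Q_nz by blast
  then show ?thesis by simp
qed

lemma Y_refl: "Y + frefl Y = - 2 * (1 - T)"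
proof -
  have rY: "frefl Y = (1 - T) * (- Ao) * E' - (1 + T) * (Ae * E' - Ae - E') - 2 * E'"
    by (simp add: Y_def frefl_Ao frefl_Ae frefl_E frefl_T)
  have "(1 - T * E) * (1 - T * E') * (Y + frefl Y + 2 * (1 - T)) = 0"
    using alg2[OF H1 H2 EE'] by (simp only: rY) (simp only: Y_def)
  then have "Y + frefl Y + 2 * (1 - T) = 0" using fps_cancel_left Q_nz by blast
  then show ?thesis by (simp add: algebra_simps)
qed


lemma a0: "a 0 = 1"
proof -
  have "a 0 = (1 - t) + t * a 0" using aP[of 0] by simp
  then have "(1 - t) * a 0 = (1 - t) * 1" by (simp add: algebra_simps)
  then show ?thesis using t1 by simp
qed

lemma X_nth: "fps_nth X N * fact N =
   (1 + t) * ((\<Sum>i\<le>N. real (N choose i) * (if odd i then a i else 0) * (1 - t) ^ (N - i)) - (if odd N then a N else 0))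
   - (1 - t) * ((\<Sum>i\<le>N. real (N choose i) * (if even i then a i else 0) * (1 - t) ^ (N - i)) - (1 - t) ^ N)"
proof -
  define Po where "Po = (\<Sum>i\<le>N. real (N choose i) * (if odd i then a i else 0) * (1 - t) ^ (N - i))"
  define Pe where "Pe = (\<Sum>i\<le>N. real (N choose i) * (if even i then a i else 0) * (1 - t) ^ (N - i))"
  define aN where "aN = (if odd N then a N else 0)"
  have o: "fps_nth (Ao * E) N = Po / fact N"
    unfolding Ao_def E_def Po_def by (rule egf_mult_exp)
  have e: "fps_nth (Ae * E) N = Pe / fact N"
    unfolding Ae_def E_def Pe_def by (rule egf_mult_exp)
  have ao: "fps_nth Ao N = aN / fact N" by (simp add: Ao_def aN_def)
  have en: "fps_nth E N = (1 - t) ^ N / fact N" by (simp add: E_def fps_exp_nth)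
  have "fps_nth X N = (1 + t) * (fps_nth (Ao * E) N - fps_nth Ao N) - (1 - t) * (fps_nth (Ae * E) N - fps_nth E N)"
    unfolding X_def by (simp add: T_def algebra_simps)
  also have "\<dots> = ((1 + t) * (Po - aN) - (1 - t) * (Pe - (1 - t) ^ N)) / fact N"
    unfolding o e ao en by (simp add: field_simps)
  finally show ?thesis unfolding Po_def[symmetric] Pe_def[symmetric] aN_def[symmetric] by simp
qed

lemma Y_nth: "fps_nth Y N * fact N =
   (1 - t) * (\<Sum>i\<le>N. real (N choose i) * (if odd i then a i else 0) * (1 - t) ^ (N - i))
   - (1 + t) * ((\<Sum>i\<le>N. real (N choose i) * (if even i then a i else 0) * (1 - t) ^ (N - i)) - (if even N then a N else 0) - (1 - t) ^ N)
   - 2 * (1 - t) ^ N"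
proof -
  define Po where "Po = (\<Sum>i\<le>N. real (N choose i) * (if odd i then a i else 0) * (1 - t) ^ (N - i))"
  define Pe where "Pe = (\<Sum>i\<le>N. real (N choose i) * (if even i then a i else 0) * (1 - t) ^ (N - i))"
  define aN where "aN = (if even N then a N else 0)"
  have o: "fps_nth (Ao * E) N = Po / fact N"
    unfolding Ao_def E_def Po_def by (rule egf_mult_exp)
  have e: "fps_nth (Ae * E) N = Pe / fact N"
    unfolding Ae_def E_def Pe_def by (rule egf_mult_exp)
  have ae: "fps_nth Ae N = aN / fact N" by (simp add: Ae_def aN_def)
  have en: "fps_nth E N = (1 - t) ^ N / fact N" by (simp add: E_def fps_exp_nth)
  have "fps_nth Y N = (1 - t) * fps_nth (Ao * E) N - (1 + t) * (fps_nth (Ae * E) N - fps_nth Ae N - fps_nth E N) - 2 * fps_nth E N"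
    unfolding Y_def by (simp add: T_def algebra_simps numeral_fps_const mult.assoc)
  also have "\<dots> = ((1 - t) * Po - (1 + t) * (Pe - aN - (1 - t) ^ N) - 2 * (1 - t) ^ N) / fact N"
    unfolding o e ae en by (simp add: field_simps)
  finally show ?thesis unfolding Po_def[symmetric] Pe_def[symmetric] aN_def[symmetric] by simp
qed

lemma X_odd: "odd N \<Longrightarrow> fps_nth X N = 0"
proof -
  assume N: "odd N"
  have "fps_nth (frefl X) N = fps_nth X N" using X_refl by simp
  then have "- fps_nth X N = fps_nth X N" using N by simp
  then show ?thesis by simp
qed

lemma Y_even: "even N \<Longrightarrow> N \<noteq> 0 \<Longrightarrow> fps_nth Y N = 0"
proof -
  assume N: "even N" "N \<noteq> 0"
  have "fps_nth (Y + frefl Y) N = fps_nth (- 2 * (1 - T)) N" using Y_refl by simp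
  also have "\<dots> = 0" using N(2) by (simp add: T_def numeral_fps_const)
  finally show ?thesis using N(1) by simp
qed

definition "Os N = (\<Sum>m<N. if odd m then real (N choose m) * a m * (1 - t) ^ (N - 1 - m) else 0)"
definition "Es N = (\<Sum>m<N. if even m \<and> 0 < m then real (N choose m) * a m * (1 - t) ^ (N - 1 - m) else 0)"

lemma Po_eq: "(\<Sum>i\<le>N. real (N choose i) * (if odd i then a i else 0) * (1 - t) ^ (N - i))
   = (1 - t) * Os N + (if odd N then a N else 0)"
proof -
  have "(\<Sum>i\<le>N. real (N choose i) * (if odd i then a i else 0) * (1 - t) ^ (N - i))
     = (\<Sum>i<N. real (N choose i) * (if odd i then a i else 0) * (1 - t) ^ (N - i)) + (if odd N then a N else 0)"
    by (simp add: lessThan_Suc_atMost[symmetric])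
  also have "(\<Sum>i<N. real (N choose i) * (if odd i then a i else 0) * (1 - t) ^ (N - i)) = (1 - t) * Os N"
    unfolding Os_def sum_distrib_left
  proof (rule sum.cong)
    fix i assume "i \<in> {..<N}"
    then have "N - i = Suc (N - 1 - i)" by auto
    then show "real (N choose i) * (if odd i then a i else 0) * (1 - t) ^ (N - i) =
      (1 - t) * (if odd i then real (N choose i) * a i * (1 - t) ^ (N - 1 - i) else 0)" by simp
  qed simp
  finally show ?thesis .
qed

lemma Pe_eq: "1 \<le> N \<Longrightarrow> (\<Sum>i\<le>N. real (N choose i) * (if even i then a i else 0) * (1 - t) ^ (N - i))
   = (1 - t) * Es N + (1 - t) ^ N + (if even N then a N else 0)"
proof -
  assume N: "1 \<le> N"
  have gN: "(1 - t) ^ N = (1 - t) * (1 - t) ^ (N - 1)" using N by (cases N) auto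
  have "(\<Sum>i\<le>N. real (N choose i) * (if even i then a i else 0) * (1 - t) ^ (N - i))
     = (\<Sum>i<N. real (N choose i) * (if even i then a i else 0) * (1 - t) ^ (N - i)) + (if even N then a N else 0)"
    by (simp add: lessThan_Suc_atMost[symmetric])
  also have "(\<Sum>i<N. real (N choose i) * (if even i then a i else 0) * (1 - t) ^ (N - i))
     = (\<Sum>i<N. (1 - t) * (if even i \<and> 0 < i then real (N choose i) * a i * (1 - t) ^ (N - 1 - i) else 0)
         + (if i = 0 then (1 - t) ^ N else 0))"
  proof (rule sum.cong)
    fix i assume "i \<in> {..<N}"
    then have "N - i = Suc (N - 1 - i)" by auto
    then show "real (N choose i) * (if even i then a i else 0) * (1 - t) ^ (N - i) =
      (1 - t) * (if even i \<and> 0 < i then real (N choose i) * a i * (1 - t) ^ (N - 1 - i) else 0) + (if i = 0 then (1 - t) ^ N else 0)"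
      using gN by (auto simp: a0)
  qed simp
  also have "\<dots> = (1 - t) * Es N + (1 - t) ^ N"
    using N by (simp add: sum.distrib Es_def sum_distrib_left)
  finally show ?thesis by simp
qed

lemma I_odd: "odd N \<Longrightarrow> (1 + t) * Os N = (1 - t) * Es N"
proof -
  assume N: "odd N"
  then have N1: "1 \<le> N" by (cases N) auto
  have "0 = (1 + t) * ((1 - t) * Os N) - (1 - t) * ((1 - t) * Es N)"
    using X_nth[of N] X_odd[OF N] unfolding Po_eq Pe_eq[OF N1] using N by simp
  then have "(1 - t) * ((1 + t) * Os N - (1 - t) * Es N) = 0" by (simp add: algebra_simps)
  then show ?thesis using t1 by simp
qed

lemma I_even: "even N \<Longrightarrow> 2 \<le> N \<Longrightarrow> (1 - t) * Os N = (1 + t) * Es N + 2 * (1 - t) ^ (N - 1)"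
proof -
  assume N: "even N" "2 \<le> N"
  then have N1: "1 \<le> N" by simp
  have g: "(1 - t) ^ N = (1 - t) * (1 - t) ^ (N - 1)" using N1 by (cases N) auto
  have "0 = (1 - t) * ((1 - t) * Os N) - (1 + t) * ((1 - t) * Es N) - 2 * (1 - t) ^ N"
    using Y_nth[of N] Y_even[of N] N unfolding Po_eq Pe_eq[OF N1] by simp
  then have "(1 - t) * ((1 - t) * Os N - (1 + t) * Es N - 2 * (1 - t) ^ (N - 1)) = 0"
    unfolding g by (simp add: algebra_simps)
  then show ?thesis using t1 by simp
qed

end

lemma eul_rec:
  assumes N: "1 \<le> N"
  shows "eulerian N t = (\<Sum>m<N. real (N choose m) * (1 - t) ^ (N - 1 - m) * rho t t m * eulerian m t)"
proof -
  have "D t t (Suc m) N = (1 - t) ^ (N - 1 - m)" for m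
    unfolding D_def rr_def by simp
  then show ?thesis using S_rec[OF N, of t t] by (simp add: eulerian_Apq)
qed

lemma eul_P:
  fixes t :: real
  defines "g \<equiv> 1 - t"
  shows "eulerian N t = g ^ (N + 1) + t * (\<Sum>i\<le>N. real (N choose i) * eulerian i t * g ^ (N - i))"
proof (cases "N = 0")
  case True
  then show ?thesis by (simp add: eulerian_Apq Apq0 g_def)
next
  case False
  then have N: "1 \<le> N" by simp
  let ?a = "\<lambda>m. eulerian m t"
  have "g * ?a N = (\<Sum>m<N. real (N choose m) * g ^ (N - m) * rho t t m * ?a m)"
  proof -
    have "g * ?a N = (\<Sum>m<N. g * (real (N choose m) * g ^ (N - 1 - m) * rho t t m * ?a m))"
      unfolding eul_rec[OF N] g_def sum_distrib_left by simp
    also have "\<dots> = (\<Sum>m<N. real (N choose m) * g ^ (N - m) * rho t t m * ?a m)"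
    proof (rule sum.cong)
      fix m assume "m \<in> {..<N}"
      then have "N - m = Suc (N - 1 - m)" by auto
      then show "g * (real (N choose m) * g ^ (N - 1 - m) * rho t t m * ?a m) = real (N choose m) * g ^ (N - m) * rho t t m * ?a m"
        by simp
    qed simp
    finally show ?thesis .
  qed
  also have "\<dots> = (\<Sum>m<N. t * (real (N choose m) * g ^ (N - m) * ?a m) + (if m = 0 then (1 - t) * g ^ N else 0))"
    by (rule sum.cong) (auto simp: rho_def rr_def eulerian_Apq Apq0 algebra_simps)
  also have "\<dots> = (\<Sum>m<N. t * (real (N choose m) * g ^ (N - m) * ?a m)) + (\<Sum>m<N. (if m = 0 then (1 - t) * g ^ N else 0))"
    by (rule sum.distrib)
  also have "(\<Sum>m<N. (if m = 0 then (1 - t) * g ^ N else 0)) = (1 - t) * g ^ N"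
    using N by (simp add: sum.delta algebra_simps)
  also have "(\<Sum>m<N. t * (real (N choose m) * g ^ (N - m) * ?a m)) = t * (\<Sum>m<N. real (N choose m) * g ^ (N - m) * ?a m)"
    by (simp add: sum_distrib_left)
  finally have *: "g * ?a N = t * (\<Sum>m<N. real (N choose m) * g ^ (N - m) * ?a m) + (1 - t) * g ^ N" .
  have "(\<Sum>i\<le>N. real (N choose i) * ?a i * g ^ (N - i)) = (\<Sum>m<N. real (N choose m) * g ^ (N - m) * ?a m) + ?a N"
    by (simp add: lessThan_Suc_atMost[symmetric] mult_ac)
  then show ?thesis using * unfolding g_def by (simp add: algebra_simps)
qed


lemma eulseq_inst:
  assumes "t \<noteq> 1" shows "eulseq (\<lambda>N. eulerian N t) t"
proof (unfold_locales)
  fix N show "eulerian N t = (1 - t) ^ (N + 1) + t * (\<Sum>i\<le>N. real (N choose i) * eulerian i t * (1 - t) ^ (N - i))"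
    by (rule eul_P)
next
  show "t \<noteq> 1" by fact
qed

lemma parity_diff: "(m::nat) < N \<Longrightarrow> even (N - 1 - m) \<longleftrightarrow> (even N \<longleftrightarrow> odd m)"
proof -
  assume "m < N"
  then obtain k where k: "N = Suc (m + k)" using less_iff_Suc_add by auto
  then have "N - 1 - m = k" by simp
  then show ?thesis using k by auto
qed

lemma D_K:
  assumes K: "K^2 = (1 - p) * (1 - q)" "K \<noteq> 0"
  shows "Suc m \<le> N \<Longrightarrow> D p q (Suc m) N = K ^ (N - 1 - m) * (if even (N - 1 - m) then 1 else (1 - rr p q (N - 1)) / K)"
proof (induction N rule: nat_induct_at_least)
  case base
  then show ?case by (simp add: D_def)
next
  case (Suc N)
  have e: "Suc N - 1 - m = Suc (N - 1 - m)" using Suc.hyps by auto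
  have DS: "D p q (Suc m) (Suc N) = D p q (Suc m) N * (1 - rr p q N)" using D_Suc Suc.hyps by simp
  show ?case
  proof (cases "even (N - 1 - m)")
    case True
    then show ?thesis unfolding DS Suc.IH e using K(2) by simp
  next
    case False
    have rr2: "(1 - rr p q (N - 1)) * (1 - rr p q N) = K^2"
      using Suc.hyps K(1) by (cases "odd N") (auto simp: rr_def)
    have "D p q (Suc m) (Suc N) = K ^ (N - 1 - m) * ((1 - rr p q (N - 1)) * (1 - rr p q N)) / K"
      unfolding DS Suc.IH using False by simp
    also have "\<dots> = K ^ Suc (N - 1 - m)" unfolding rr2 using K(2) by (simp add: power2_eq_square)
    finally show ?thesis unfolding e using False by simp
  qed
qed

lemma split3:
  fixes f :: "nat \<Rightarrow> real" and N :: nat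
  assumes "1 \<le> N"
  shows "(\<Sum>m<N. f m) = f 0 + (\<Sum>m<N. if odd m then f m else 0) + (\<Sum>m<N. if even m \<and> 0 < m then f m else 0)"
proof -
  have "(\<Sum>m<N. f m) = (\<Sum>m<N. (if m = 0 then f 0 else 0) + ((if odd m then f m else 0) + (if even m \<and> 0 < m then f m else 0)))"
    by (rule sum.cong) (auto simp: not_less)
  also have "\<dots> = f 0 + ((\<Sum>m<N. if odd m then f m else 0) + (\<Sum>m<N. if even m \<and> 0 < m then f m else 0))"
    using assms by (simp add: sum.distrib sum.delta)
  finally show ?thesis by simp
qed

definition cT :: "real \<Rightarrow> real \<Rightarrow> real \<Rightarrow> nat \<Rightarrow> real" where
  "cT \<mu> q t N = (if N = 0 then 1 else if odd N then 1 / \<mu> else (1 + t) / (1 + q))"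

lemma close_odd:
  fixes p q t \<mu> Os Es :: real
  assumes h: "2*t*(1+p*q) = (p+q)*(1+t^2)" and mu: "\<mu> \<noteq> 0" "\<mu>^2*(1+t^2) = 1+p*q"
    and t1: "t \<noteq> 1" "t \<noteq> -1" and q1: "1 + q \<noteq> 0"
    and I: "(1 + t) * Os = (1 - t) * Es"
  shows "((1 - q) / (\<mu> * (1 - t)) * p * (1 / \<mu>) - \<mu> * (1 / \<mu>) * t) * Os
       + (1 * q * ((1 + t) / (1 + q)) - \<mu> * (1 / \<mu>) * t) * Es = 0"
proof -
  define bo where "bo = (1 - q) / (\<mu> * (1 - t)) * p * (1 / \<mu>) - \<mu> * (1 / \<mu>) * t"
  define be where "be = 1 * q * ((1 + t) / (1 + q)) - \<mu> * (1 / \<mu>) * t"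
  have t2: "1 + t^2 \<noteq> 0" using zero_le_power2[of t] by linarith
  have tt: "1 - t \<noteq> 0" "1 + t \<noteq> 0" using t1 by auto
  have bo_s: "bo * (1 - t) = p*(1-q)/\<mu>^2 - t*(1-t)"
    unfolding bo_def using mu(1) tt by (simp add: field_simps power2_eq_square)
  have be_s: "be * (1 + t) = q*(1+t)^2/(1+q) - t*(1+t)"
    unfolding be_def using q1 mu(1) by (simp add: field_simps power2_eq_square)
  have e1: "\<mu>^2 * (1 + q) * (bo * (1 - t) + be * (1 + t)) = p * (1 - q) * (1 + q) + \<mu>^2 * (q * (1 + t)^2 - 2 * t * (1 + q))"
  proof -
    define A where "A = p*(1-q)/\<mu>^2"
    define B where "B = q*(1+t)^2/(1+q)"
    have c1: "\<mu>^2*(1+q)*A = p*(1-q)*(1+q)" unfolding A_def using mu(1) by (simp add: field_simps)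
    have c2: "\<mu>^2*(1+q)*B = \<mu>^2*(q*(1+t)^2)" unfolding B_def using q1 by (simp add: field_simps)
    have "\<mu>^2 * (1 + q) * ((A - t*(1-t)) + (B - t*(1+t))) = \<mu>^2*(1+q)*A + \<mu>^2*(1+q)*B - \<mu>^2*(2*t*(1+q))"
      by (simp add: algebra_simps)
    also have "\<dots> = p * (1 - q) * (1 + q) + \<mu>^2 * (q * (1 + t)^2 - 2 * t * (1 + q))"
      unfolding c1 c2 by (simp add: algebra_simps)
    finally show ?thesis unfolding bo_s be_s A_def B_def .
  qed
  have e2: "(1 + t^2) * (p * (1 - q) * (1 + q) + \<mu>^2 * (q * (1 + t)^2 - 2 * t * (1 + q))) = 0"
    using h mu(2) by algebra
  have c: "bo * (1 - t) + be * (1 + t) = 0"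
    using e1 e2 t2 mu(1) q1 by simp
  have "(1 + t) * (bo * Os + be * Es) = (bo * (1 - t) + be * (1 + t)) * Es"
  proof -
    have "(1+t)*(bo*Os+be*Es) = bo*((1+t)*Os) + (1+t)*be*Es" by (simp add: algebra_simps)
    also have "\<dots> = bo*((1-t)*Es) + (1+t)*be*Es" using I by simp
    also have "\<dots> = (bo*(1-t) + be*(1+t))*Es" by (simp add: algebra_simps)
    finally show ?thesis .
  qed
  then have "(1 + t) * (bo * Os + be * Es) = 0" using c by simp
  then show ?thesis using tt unfolding bo_def be_def by simp
qed


lemma close_even_poly:
  fixes p q t \<mu> im iq it it2 Os Es Z :: real
  assumes h: "2*t*(1+p*q) = (p+q)*(1+t^2)" and mu: "\<mu>^2*(1+t^2) = 1+p*q"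
    and im: "\<mu> * im = 1" and iq: "(1 + q) * iq = 1" and it: "(1 - t) * it = 1"
    and it2: "(1 + t^2) * it2 = 1" and I: "(1 - t) * Os = (1 + t) * Es + 2 * Z"
  shows "((1 - p) * im * it - \<mu> * ((1 + t) * iq)) * Z + (p * im - \<mu> * ((1 + t) * iq) * t) * Os
       + ((1 - p) * im * it * q * ((1 + t) * iq) - \<mu> * ((1 + t) * iq) * t) * Es = 0"
  using assms by algebra

lemma close_even:
  fixes p q t \<mu> Os Es Z :: real
  assumes h: "2*t*(1+p*q) = (p+q)*(1+t^2)" and mu: "\<mu> \<noteq> 0" "\<mu>^2*(1+t^2) = 1+p*q"
    and t1: "t \<noteq> 1" and q1: "1 + q \<noteq> 0"
    and I: "(1 - t) * Os = (1 + t) * Es + 2 * Z"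
  shows "((1 - p) / (\<mu> * (1 - t)) * 1 * 1 - \<mu> * ((1 + t) / (1 + q)) * 1) * Z
       + (1 * p * (1 / \<mu>) - \<mu> * ((1 + t) / (1 + q)) * t) * Os
       + ((1 - p) / (\<mu> * (1 - t)) * q * ((1 + t) / (1 + q)) - \<mu> * ((1 + t) / (1 + q)) * t) * Es = 0"
proof -
  have t2: "1 + t^2 \<noteq> 0" using zero_le_power2[of t] by linarith
  have tt: "1 - t \<noteq> 0" using t1 by simp
  have "((1 - p) * (1/\<mu>) * (1/(1-t)) - \<mu> * ((1 + t) * (1/(1+q)))) * Z + (p * (1/\<mu>) - \<mu> * ((1 + t) * (1/(1+q))) * t) * Os
       + ((1 - p) * (1/\<mu>) * (1/(1-t)) * q * ((1 + t) * (1/(1+q))) - \<mu> * ((1 + t) * (1/(1+q))) * t) * Es = 0"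
  proof -
    have pr: "\<mu> * (1/\<mu>) = 1" "(1+q)*(1/(1+q)) = 1" "(1-t)*(1/(1-t)) = 1" "(1+t^2)*(1/(1+t^2)) = 1"
      using mu(1) q1 tt t2 by auto
    show ?thesis by (rule close_even_poly[OF h mu(2) pr I])
  qed
  then show ?thesis by simp
qed

lemma main:
  fixes p q t \<mu> :: real
  assumes h: "2*t*(1+p*q) = (p+q)*(1+t^2)" and mu: "\<mu> \<noteq> 0" "\<mu>^2*(1+t^2) = 1+p*q"
    and t1: "t \<noteq> 1" "t \<noteq> -1" and q1: "1 + q \<noteq> 0"
  shows "Apq N p q = eulerian N t * \<mu>^N * cT \<mu> q t N"
proof (induction N rule: less_induct)
  case (less N)
  show ?case
  proof (cases "N = 0")
    case True
    then show ?thesis by (simp add: Apq0 eulerian_Apq cT_def)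
  next
    case False
    then have N1: "1 \<le> N" by simp
    interpret E: eulseq "\<lambda>N. eulerian N t" t using eulseq_inst t1(1) by simp
    define K where "K = \<mu> * (1 - t)"
    have t2: "1 + t^2 \<noteq> 0" using zero_le_power2[of t] by linarith
    have K2: "K^2 = (1 - p) * (1 - q)"
    proof -
      have "(1 + t^2) * (K^2 - (1 - p) * (1 - q)) = 0" unfolding K_def using h mu(2) by algebra
      then show ?thesis using t2 by simp
    qed
    have Knz: "K \<noteq> 0" unfolding K_def using mu(1) t1(1) by simp
    define G where "G m = real (N choose m) * eulerian m t * (1 - t) ^ (N - 1 - m)" for m
    define cD where "cD m = (if even (N - 1 - m) then 1 else (1 - rr p q (N - 1)) / K)" for m
    define w where "w m = cD m * rho p q m * cT \<mu> q t m" for m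
    have trm: "real (N choose m) * D p q (Suc m) N * rho p q m * Apq m p q = \<mu> ^ (N - 1) * (G m * w m)"
      if m: "m < N" for m
    proof -
      have A: "Apq m p q = eulerian m t * \<mu> ^ m * cT \<mu> q t m" using less.IH m by simp
      have Dm: "D p q (Suc m) N = K ^ (N - 1 - m) * cD m"
        unfolding cD_def using D_K[OF K2 Knz] m by simp
      have P: "K ^ (N - 1 - m) * \<mu> ^ m = \<mu> ^ (N - 1) * (1 - t) ^ (N - 1 - m)"
      proof -
        have "K ^ (N - 1 - m) * \<mu> ^ m = \<mu> ^ (N - 1 - m + m) * (1 - t) ^ (N - 1 - m)"
          unfolding K_def by (simp add: power_mult_distrib power_add)
        also have "N - 1 - m + m = N - 1" using m by simp
        finally show ?thesis .
      qed
      have "real (N choose m) * D p q (Suc m) N * rho p q m * Apq m p q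
          = (K ^ (N - 1 - m) * \<mu> ^ m) * (real (N choose m) * eulerian m t * (cD m * rho p q m * cT \<mu> q t m))"
        unfolding A Dm by (simp only: mult.assoc mult.commute mult.left_commute)
      also have "\<dots> = \<mu> ^ (N - 1) * ((real (N choose m) * eulerian m t * (1 - t) ^ (N - 1 - m)) * (cD m * rho p q m * cT \<mu> q t m))"
        unfolding P by (simp only: mult.assoc mult.commute mult.left_commute)
      finally show ?thesis unfolding G_def w_def .
    qed
    have S: "Apq N p q = \<mu> ^ (N - 1) * (\<Sum>m<N. G m * w m)"
      unfolding S_rec[OF N1] sum_distrib_left by (rule sum.cong) (simp_all add: trm)
    have Eu: "eulerian N t = (\<Sum>m<N. G m * rho t t m)"
      unfolding eul_rec[OF N1] G_def by (rule sum.cong) (simp_all add: ac_simps)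
    define c where "c = \<mu> * cT \<mu> q t N"
    define v where "v m = w m - c * rho t t m" for m
    have G0: "G 0 = (1 - t) ^ (N - 1)" by (simp add: G_def eulerian_Apq Apq0)
    have cT0: "cT \<mu> q t 0 = 1" by (simp add: cT_def)
    have key: "(\<Sum>m<N. G m * v m) = 0"
    proof (cases "odd N")
      case True
      have rN: "rr p q (N - 1) = q" using True N1 by (simp add: rr_def)
      have cN: "cT \<mu> q t N = 1 / \<mu>" using True N1 by (simp add: cT_def)
      define vo where "vo = (1 - q) / (\<mu> * (1 - t)) * p * (1 / \<mu>) - \<mu> * (1 / \<mu>) * t"
      define ve where "ve = 1 * q * ((1 + t) / (1 + q)) - \<mu> * (1 / \<mu>) * t"
      have v0: "v 0 = 0"
      proof -
        obtain k where k: "N = 2 * k + 1" using True oddE by blast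
        have "cD 0 = 1" unfolding cD_def k by simp
        moreover have "rho p q 0 = 1" "rho t t 0 = 1" by (simp_all add: rho_def)
        ultimately have "v 0 = 1 - \<mu> * (1 / \<mu>)" by (simp add: v_def w_def c_def cN cT0)
        then show ?thesis using mu(1) by simp
      qed
      have vod: "v m = vo" if "m < N" "odd m" for m
      proof -
        have m0: "m \<noteq> 0" using odd_pos[OF that(2)] by simp
        have "\<not> even (N - 1 - m)" using parity_diff[OF that(1)] that(2) True by simp
        then have "cD m = (1 - q) / K" unfolding cD_def rN by simp
        moreover have "rho p q m = p" "cT \<mu> q t m = 1 / \<mu>" "rho t t m = t"
          using m0 that(2) by (simp_all add: rho_def rr_def cT_def)
        ultimately show ?thesis by (simp add: v_def w_def c_def cN vo_def K_def)
      qed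
      have vev: "v m = ve" if "m < N" "even m" "0 < m" for m
      proof -
        have m0: "m \<noteq> 0" using that(3) by auto
        have "even (N - 1 - m)" using parity_diff[OF that(1)] that(2) True by simp
        then have "cD m = 1" by (simp add: cD_def)
        moreover have "rho p q m = q" "cT \<mu> q t m = (1 + t) / (1 + q)" "rho t t m = t"
          using m0 that(2) by (simp_all add: rho_def rr_def cT_def)
        ultimately show ?thesis by (simp add: v_def w_def c_def cN ve_def)
      qed
      have so: "(\<Sum>m<N. if odd m then G m * v m else 0) = vo * E.Os N"
        unfolding E.Os_def sum_distrib_left by (rule sum.cong) (auto simp: G_def vod)
      have se: "(\<Sum>m<N. if even m \<and> 0 < m then G m * v m else 0) = ve * E.Es N"
        unfolding E.Es_def sum_distrib_left by (rule sum.cong) (auto simp: G_def vev)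
      have "vo * E.Os N + ve * E.Es N = 0"
        unfolding vo_def ve_def by (rule close_odd[OF h mu t1 q1 E.I_odd[OF True]])
      then show ?thesis using split3[OF N1, of "\<lambda>m. G m * v m"] so se v0 by simp
    next
      case False
      then have "N \<noteq> 1" by auto
      then have N2: "2 \<le> N" using N1 by linarith
      have rN: "rr p q (N - 1) = p" using False N1 by (simp add: rr_def)
      have cN: "cT \<mu> q t N = (1 + t) / (1 + q)" using False N1 by (simp add: cT_def)
      define v0 where "v0 = (1 - p) / (\<mu> * (1 - t)) * 1 * 1 - \<mu> * ((1 + t) / (1 + q)) * 1"
      define vo where "vo = 1 * p * (1 / \<mu>) - \<mu> * ((1 + t) / (1 + q)) * t"
      define ve where "ve = (1 - p) / (\<mu> * (1 - t)) * q * ((1 + t) / (1 + q)) - \<mu> * ((1 + t) / (1 + q)) * t"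
      have vz: "v 0 = v0"
      proof -
        obtain j where j: "N = 2 * j" using False by (auto elim: evenE)
        have e: "N - 1 - 0 = 2 * (j - 1) + 1" using j N2 by simp
        have "cD 0 = (1 - p) / K" unfolding cD_def rN e by simp
        moreover have "rho p q 0 = 1" "rho t t 0 = 1" by (simp_all add: rho_def)
        ultimately show ?thesis by (simp add: v_def w_def c_def cN cT0 v0_def K_def)
      qed
      have vod: "v m = vo" if "m < N" "odd m" for m
      proof -
        have m0: "m \<noteq> 0" using odd_pos[OF that(2)] by simp
        have "even (N - 1 - m)" using parity_diff[OF that(1)] that(2) False by simp
        then have "cD m = 1" by (simp add: cD_def)
        moreover have "rho p q m = p" "cT \<mu> q t m = 1 / \<mu>" "rho t t m = t"
          using m0 that(2) by (simp_all add: rho_def rr_def cT_def)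
        ultimately show ?thesis by (simp add: v_def w_def c_def cN vo_def)
      qed
      have vev: "v m = ve" if "m < N" "even m" "0 < m" for m
      proof -
        have m0: "m \<noteq> 0" using that(3) by auto
        have "\<not> even (N - 1 - m)" using parity_diff[OF that(1)] that(2) False by simp
        then have "cD m = (1 - p) / K" unfolding cD_def rN by simp
        moreover have "rho p q m = q" "cT \<mu> q t m = (1 + t) / (1 + q)" "rho t t m = t"
          using m0 that(2) by (simp_all add: rho_def rr_def cT_def)
        ultimately show ?thesis by (simp add: v_def w_def c_def cN ve_def K_def)
      qed
      have so: "(\<Sum>m<N. if odd m then G m * v m else 0) = vo * E.Os N"
        unfolding E.Os_def sum_distrib_left by (rule sum.cong) (auto simp: G_def vod)
      have se: "(\<Sum>m<N. if even m \<and> 0 < m then G m * v m else 0) = ve * E.Es N"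
        unfolding E.Es_def sum_distrib_left by (rule sum.cong) (auto simp: G_def vev)
      have "v0 * (1 - t) ^ (N - 1) + vo * E.Os N + ve * E.Es N = 0"
        using False unfolding v0_def vo_def ve_def by (intro close_even[OF h mu t1(1) q1 E.I_even[OF _ N2]]) simp
      then show ?thesis using split3[OF N1, of "\<lambda>m. G m * v m"] so se vz G0 by (simp add: mult.commute)
    qed
    have "(\<Sum>m<N. G m * w m) = c * eulerian N t"
    proof -
      have "(\<Sum>m<N. G m * w m) = (\<Sum>m<N. G m * v m + c * (G m * rho t t m))"
        by (rule sum.cong) (simp_all add: v_def algebra_simps)
      also have "\<dots> = (\<Sum>m<N. G m * v m) + c * (\<Sum>m<N. G m * rho t t m)"
        by (simp add: sum.distrib sum_distrib_left)
      finally have "(\<Sum>m<N. G m * w m) = (\<Sum>m<N. G m * v m) + c * (\<Sum>m<N. G m * rho t t m)" .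
      then show ?thesis using key Eu by simp
    qed
    then have "Apq N p q = \<mu> ^ (N - 1) * \<mu> * eulerian N t * cT \<mu> q t N"
      unfolding S c_def by simp
    also have "\<mu> ^ (N - 1) * \<mu> = \<mu> ^ N" using N1 by (cases N) auto
    finally show ?thesis by simp
  qed
qed


theorem corollary2p3:
  fixes n :: nat
  shows "\<exists>\<epsilon>>0. \<forall>p q :: real. \<bar>p\<bar> < \<epsilon> \<and> \<bar>q\<bar> < \<epsilon> \<longrightarrow>
    (let y = (p + q) / (2 * (1 + p*q));
         Cs = catC ((p + q)^2 / (4 * (1 + p*q)^2))
     in Apq (2*n+1) p q = eulerian (2*n+1) (y * Cs) * ((1 + p*q) / Cs) ^ n
      \<and> Apq (2*n+2) p q = (1 + y * Cs) / (1 + q) * eulerian (2*n+2) (y * Cs) * ((1 + p*q) / Cs) ^ (n+1))"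
proof (intro exI[of _ "1/4"] conjI allI impI)
  show "(0::real) < 1/4" by simp
  fix p q :: real
  assume pq: "\<bar>p\<bar> < 1/4 \<and> \<bar>q\<bar> < 1/4"
  define u where "u = 1 + p * q"
  have pq1: "\<bar>p * q\<bar> < 1/16"
  proof -
    have "\<bar>p\<bar> * \<bar>q\<bar> \<le> \<bar>p\<bar> * (1/4)" using pq by (intro mult_left_mono) auto
    also have "\<dots> < 1/16" using pq by simp
    finally show ?thesis by (simp add: abs_mult)
  qed
  have u: "15/16 < u" using pq1 unfolding u_def by linarith
  define y where "y = (p + q) / (2 * u)"
  define z where "z = (p + q)^2 / (4 * u^2)"
  have zy: "z = y^2" by (simp add: y_def z_def power_divide power_mult_distrib)
  have pq2: "\<bar>p + q\<bar> < 1/2" using pq by linarith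
  have ya: "\<bar>y\<bar> < 4/15"
  proof -
    have "\<bar>y\<bar> * (2 * u) = \<bar>p + q\<bar>" using u by (simp add: y_def abs_divide abs_mult)
    then have "\<bar>y\<bar> * (2 * u) < 1/2" using pq2 by simp
    moreover have "\<bar>y\<bar> * (15/8) \<le> \<bar>y\<bar> * (2 * u)" using u by (intro mult_left_mono) auto
    ultimately show ?thesis by linarith
  qed
  have z14: "4 * z < 1"
  proof -
    have "y^2 = \<bar>y\<bar>^2" by simp
    also have "\<dots> \<le> (4/15)^2" using ya by (intro power_mono) auto
    finally have "y^2 \<le> 16/225" by (simp add: power2_eq_square)
    then show ?thesis using zy by linarith
  qed
  have z0: "0 \<le> z" using zy by simp
  define s where "s = sqrt (1 - 4 * z)"
  have s0: "0 < s" using z14 by (simp add: s_def)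
  have s1: "s \<le> 1" using z0 by (simp add: s_def)
  have s2: "s^2 = 1 - 4 * z" using z14 by (simp add: s_def)
  define C where "C = 2 / (1 + s)"
  have Cs: "catC z = C"
  proof (cases "z = 0")
    case True
    then have "s = 1" by (simp add: s_def)
    then show ?thesis using True by (simp add: catC_def C_def)
  next
    case False
    have "(1 - s) * (1 + s) = 4 * z" using s2 by (simp add: algebra_simps power2_eq_square)
    then have "(1 - s) / (2 * z) = 2 / (1 + s)" using False s0
      by (simp add: field_simps)
    then show ?thesis using False by (simp add: catC_def C_def s_def)
  qed
  have C1: "C = 1 + z * C^2"
  proof -
    have ns: "1 + s \<noteq> 0" using s0 by simp
    have a: "4 * z = (1 - s) * (1 + s)" using s2 by (simp add: algebra_simps power2_eq_square)
    have "z * C^2 = (4 * z) / ((1 + s) * (1 + s))" unfolding C_def using ns by (simp add: field_simps power2_eq_square)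
    also have "\<dots> = (1 - s) / (1 + s)" unfolding a using ns by simp
    finally have "z * C^2 = (1 - s) / (1 + s)" .
    moreover have "C = 1 + (1 - s) / (1 + s)" unfolding C_def using ns by (simp add: field_simps)
    ultimately show ?thesis by simp
  qed
  have Cpos: "0 < C" "C \<le> 2" using s0 by (simp_all add: C_def field_simps)
  define t where "t = y * C"
  have tC: "C = 1 + t^2" using C1 zy by (simp add: t_def power_mult_distrib)
  have ta: "\<bar>t\<bar> < 1"
  proof -
    have "\<bar>t\<bar> = \<bar>y\<bar> * C" using Cpos by (simp add: t_def abs_mult)
    also have "\<dots> \<le> \<bar>y\<bar> * 2" using Cpos by (intro mult_left_mono) auto
    finally show ?thesis using ya by simp
  qed
  define lam where "lam = u / C"
  have lam0: "0 < lam" using u Cpos by (simp add: lam_def)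
  define \<mu> where "\<mu> = sqrt lam"
  have mu0: "\<mu> \<noteq> 0" using lam0 by (simp add: \<mu>_def)
  have mu2: "\<mu>^2 = lam" using lam0 by (simp add: \<mu>_def)
  have h: "2*t*(1+p*q) = (p+q)*(1+t^2)"
  proof -
    have e: "2 * y * u = p + q" using u by (simp add: y_def)
    have "2*t*(1+p*q) = (2*y*u)*C" by (simp add: t_def u_def algebra_simps)
    also have "\<dots> = (p+q)*(1+t^2)" using e tC by simp
    finally show ?thesis .
  qed
  have mu3: "\<mu>^2*(1+t^2) = 1+p*q" using Cpos unfolding mu2 tC[symmetric] lam_def u_def by simp
  have t1: "t \<noteq> 1" "t \<noteq> -1" using ta by auto
  have q1: "1 + q \<noteq> 0" using pq by auto
  note M = main[OF h mu0 mu3 t1 q1]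
  have ey: "(p + q) / (2 * (1 + p*q)) = y" by (simp add: y_def u_def)
  have ez: "(p + q)^2 / (4 * (1 + p*q)^2) = z" by (simp add: z_def u_def)
  have yC: "y * C = t" by (simp add: t_def)
  have lC: "(1 + p * q) / C = \<mu>^2" by (simp add: mu2 lam_def u_def)
  have odd1: "Apq (2*n+1) p q = eulerian (2*n+1) t * (\<mu>^2) ^ n"
  proof -
    have A: "Apq (2*n+1) p q = eulerian (2*n+1) t * \<mu>^(2*n+1) * cT \<mu> q t (2*n+1)" by (rule M)
    have c: "cT \<mu> q t (2*n+1) = 1/\<mu>" by (simp add: cT_def)
    have pw: "\<mu>^(2*n+1) * (1/\<mu>) = (\<mu>^2)^n" using mu0 by (simp add: power_mult)
    show ?thesis unfolding A c mult.assoc pw by (rule refl)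
  qed
  have even1: "Apq (2*n+2) p q = (1 + t) / (1 + q) * eulerian (2*n+2) t * (\<mu>^2) ^ (n+1)"
  proof -
    have A: "Apq (2*n+2) p q = eulerian (2*n+2) t * \<mu>^(2*n+2) * cT \<mu> q t (2*n+2)" by (rule M)
    have c: "cT \<mu> q t (2*n+2) = (1 + t) / (1 + q)" by (simp add: cT_def)
    have pw: "\<mu>^(2*n+2) = (\<mu>^2)^(n+1)"
    proof -
      have "2*n+2 = 2*(n+1)" by simp
      then show ?thesis by (simp only: power_mult)
    qed
    show ?thesis unfolding A c pw by (simp add: ac_simps)
  qed
  show "let y = (p + q) / (2 * (1 + p*q));
         Cs = catC ((p + q)^2 / (4 * (1 + p*q)^2))
     in Apq (2*n+1) p q = eulerian (2*n+1) (y * Cs) * ((1 + p*q) / Cs) ^ n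
      \<and> Apq (2*n+2) p q = (1 + y * Cs) / (1 + q) * eulerian (2*n+2) (y * Cs) * ((1 + p*q) / Cs) ^ (n+1)"
    unfolding Let_def ey ez Cs yC lC using odd1 even1 by simp
qed

end
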